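(* Let $p\ge 2$ and $\delta>0$. Define $$\mathcal{G}_\delta(t):=\int_0^t\frac{s(s+\delta)^{\frac{p-2}{2}}}{\sqrt{1+\delta+s^2}}\,ds\quad(t\ge0),\qquad H_{\frac p2}(\xi)=\begin{cases}(|\xi|-1)_+^{\frac p2}\frac{\xi}{|\xi|}&\xi\ne0,\\ 0&\xi=0.\end{cases}$$ Then there is a constant $c_p>0$ depending only on $p$ such that for all $\xi,\eta\in\mathbb{R}^n$, $$\left|\mathcal{G}_\delta\left((|\xi|-\delta-1)_+\right)-\mathcal{G}_\delta\left((|\eta|-\delta-1)_+\right)\right|^2\le c_p\left|H_{\frac p2}(\xi)-H_{\frac p2}(\eta)\right|^2.$$
   Context: $(\cdot)_+$ denotes the positive part; $|\cdot|$ is the Euclidean norm. *)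

theory Defs
  imports "HOL-Analysis.Analysis"
begin

text \<open>Vectors of R^n are represented as functions nat => real, only the
coordinates i < n being relevant (so that the constant can be quantified
before the dimension n).\<close>

definition vnorm :: "nat \<Rightarrow> (nat \<Rightarrow> real) \<Rightarrow> real" where
  "vnorm n x = sqrt (\<Sum>i<n. (x i)\<^sup>2)"

definition posp :: "real \<Rightarrow> real" where
  "posp x = max x 0"

definition G_delta :: "real \<Rightarrow> real \<Rightarrow> real \<Rightarrow> real" where
  "G_delta p \<delta> t =
     integral {0..t} (\<lambda>s. s * (s + \<delta>) powr ((p - 2) / 2) / sqrt (1 + \<delta> + s\<^sup>2))"

definition H_half :: "real \<Rightarrow> nat \<Rightarrow> (nat \<Rightarrow> real) \<Rightarrow> (nat \<Rightarrow> real)" where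
  "H_half p n \<xi> = (\<lambda>i. if vnorm n \<xi> = 0 then 0
       else posp (vnorm n \<xi> - 1) powr (p / 2) * \<xi> i / vnorm n \<xi>)"

end

theory Submission
  imports Defs
begin

lemma vnorm_L2: "vnorm n x = L2_set x {..<n}"
  by (simp add: vnorm_def L2_set_def)

lemma vnorm_rev: "\<bar>vnorm n x - vnorm n y\<bar> \<le> vnorm n (\<lambda>i. x i - y i)"
proof -
  have 1: "L2_set x {..<n} \<le> L2_set (\<lambda>i. x i - y i) {..<n} + L2_set y {..<n}"
    using L2_set_triangle_ineq[of "\<lambda>i. x i - y i" y "{..<n}"] by simp
  have 2: "L2_set y {..<n} \<le> L2_set (\<lambda>i. y i - x i) {..<n} + L2_set x {..<n}"
    using L2_set_triangle_ineq[of "\<lambda>i. y i - x i" x "{..<n}"] by simp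
  have 3: "L2_set (\<lambda>i. y i - x i) {..<n} = L2_set (\<lambda>i. x i - y i) {..<n}"
    unfolding L2_set_def by (simp add: power2_commute)
  show ?thesis using 1 2 3 by (simp add: vnorm_L2)
qed

lemma vnorm_H: "vnorm n (H_half p n \<xi>) = posp (vnorm n \<xi> - 1) powr (p/2)"
proof (cases "vnorm n \<xi> = 0")
  case True
  then show ?thesis by (simp add: H_half_def vnorm_def posp_def)
next
  case False
  have a: "vnorm n \<xi> > 0" using False unfolding vnorm_def
    by (metis order_less_le real_sqrt_ge_zero sum_nonneg zero_le_power2)
  define c where "c = posp (vnorm n \<xi> - 1) powr (p / 2) / vnorm n \<xi>"
  have c0: "c \<ge> 0" using a by (simp add: c_def)
  have "H_half p n \<xi> = (\<lambda>i. c * \<xi> i)" using False by (simp add: H_half_def c_def)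
  then have "vnorm n (H_half p n \<xi>) = c * vnorm n \<xi>"
    using L2_set_right_distrib[OF c0, of \<xi> "{..<n}"] by (simp add: vnorm_L2)
  then show ?thesis using a by (simp add: c_def)
qed

lemma key:
  fixes p \<delta> a b :: real
  assumes p: "p \<ge> 2" and d: "\<delta> > 0" and ab: "a \<le> b"
  shows "0 \<le> G_delta p \<delta> (posp (b - \<delta> - 1)) - G_delta p \<delta> (posp (a - \<delta> - 1))
       \<and> G_delta p \<delta> (posp (b - \<delta> - 1)) - G_delta p \<delta> (posp (a - \<delta> - 1))
         \<le> posp (b - 1) powr (p/2) - posp (a - 1) powr (p/2)"
proof -
  define f where "f = (\<lambda>s::real. s * (s + \<delta>) powr ((p - 2) / 2) / sqrt (1 + \<delta> + s\<^sup>2))"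
  define k where "k = (\<lambda>s::real. (s + \<delta>) powr ((p - 2) / 2))"
  define u where "u = posp (a - \<delta> - 1)"
  define v where "v = posp (b - \<delta> - 1)"
  have u0: "0 \<le> u" and uv: "u \<le> v" using ab by (auto simp: u_def v_def posp_def)
  have Gd: "G_delta p \<delta> t = integral {0..t} f" for t by (simp add: G_delta_def f_def)
  have fc: "continuous_on {0..v} f" unfolding f_def using d
    by (intro continuous_intros) (auto, smt (verit) zero_le_power2)
  have fi: "f integrable_on {0..v}" using fc integrable_continuous_interval by blast
  have fiuv: "f integrable_on {u..v}"
    using fi integrable_subinterval_real u0 by (meson atLeastatMost_subset_iff order_refl)
  have kc: "continuous_on {u..v} k" unfolding k_def using d u0
    by (intro continuous_intros) auto
  have ki: "k integrable_on {u..v}" using kc integrable_continuous_interval by blast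
  have diff: "G_delta p \<delta> v - G_delta p \<delta> u = integral {u..v} f"
    using Henstock_Kurzweil_Integration.integral_combine[OF u0 uv fi] by (simp add: Gd)
  have fnn: "\<And>s. s \<in> {u..v} \<Longrightarrow> 0 \<le> f s" using u0 d unfolding f_def by auto
  have fk: "\<And>s. s \<in> {u..v} \<Longrightarrow> f s \<le> k s"
  proof -
    fix s assume s: "s \<in> {u..v}"
    then have s0: "s \<ge> 0" using u0 by auto
    have sq: "s \<le> sqrt (1 + \<delta> + s\<^sup>2)" using d s0 by (simp add: real_le_rsqrt)
    have sp: "sqrt (1 + \<delta> + s\<^sup>2) > 0" using d s0 by (simp add: add_pos_nonneg)
    have "f s = (s / sqrt (1 + \<delta> + s\<^sup>2)) * k s" by (simp add: f_def k_def)
    also have "\<dots> \<le> 1 * k s"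
      by (rule mult_right_mono) (use sq sp in \<open>auto simp: k_def\<close>)
    finally show "f s \<le> k s" by simp
  qed
  have I1: "0 \<le> integral {u..v} f" using integral_nonneg[OF fiuv fnn] by simp
  have I2: "integral {u..v} f \<le> integral {u..v} k" using integral_le[OF fiuv ki fk] by simp
  define K where "K = (\<lambda>t::real. (2/p) * (t + \<delta>) powr (p/2))"
  have Kd: "(K has_vector_derivative k x) (at x within {u..v})" if x: "x \<in> {u..v}" for x
  proof -
    have xp: "x + \<delta> > 0" using x u0 d by auto
    have "((\<lambda>t. (t + \<delta>) powr (p/2)) has_real_derivative (p/2) * (x + \<delta>) powr (p/2 - 1)) (at x)"
    proof -
      have d1: "((\<lambda>t. t + \<delta>) has_real_derivative 1) (at x)" by (auto intro!: derivative_eq_intros)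
      show ?thesis
        using DERIV_chain2[where f="\<lambda>z. z powr (p/2)" and g="\<lambda>t. t + \<delta>", OF has_real_derivative_powr[OF xp] d1]
        by simp
    qed
    then have "(K has_real_derivative (2/p) * ((p/2) * (x + \<delta>) powr (p/2 - 1))) (at x)"
      unfolding K_def by (rule DERIV_cmult)
    moreover have "(2/p) * ((p/2) * (x + \<delta>) powr (p/2 - 1)) = k x"
      using p by (simp add: k_def diff_divide_distrib)
    ultimately show ?thesis
      by (simp add: has_real_derivative_iff_has_vector_derivative[symmetric] has_field_derivative_at_within)
  qed
  have "integral {u..v} k = K v - K u"
    using fundamental_theorem_of_calculus[OF uv Kd] by (simp add: integral_unique)
  then have main: "0 \<le> G_delta p \<delta> v - G_delta p \<delta> u \<and> G_delta p \<delta> v - G_delta p \<delta> u \<le> K v - K u"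
    using I1 I2 diff by simp
  have hmono: "posp (a - 1) powr (p/2) \<le> posp (b - 1) powr (p/2)"
    using ab p by (intro powr_mono2) (auto simp: posp_def)
  show ?thesis
  proof (cases "b \<le> \<delta> + 1")
    case True
    then have "v = 0" "u = 0" using ab by (auto simp: u_def v_def posp_def)
    then show ?thesis using hmono by (simp add: u_def v_def)
  next
    case False
    then have vb: "v + \<delta> = b - 1" by (simp add: v_def posp_def)
    have "u + \<delta> \<ge> posp (a - 1)" using d by (simp add: u_def posp_def)
    then have ua: "(u + \<delta>) powr (p/2) \<ge> posp (a - 1) powr (p/2)"
      using p by (intro powr_mono2) (auto simp: posp_def)
    have bpos: "posp (b - 1) = b - 1" using False d by (simp add: posp_def)
    have X: "K v - K u = (2/p) * ((b - 1) powr (p/2) - (u + \<delta>) powr (p/2))"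
      by (simp add: K_def vb right_diff_distrib)
    have "(u + \<delta>) powr (p/2) \<le> (b - 1) powr (p/2)"
      using vb uv d p u0 by (intro powr_mono2) auto
    then have "K v - K u \<le> (b - 1) powr (p/2) - (u + \<delta>) powr (p/2)"
      unfolding X using p by (intro mult_left_le_one_le) auto
    then show ?thesis using main ua bpos by (simp add: u_def v_def)
  qed
qed

theorem mainTheorem4:
  fixes p :: real
  assumes "p \<ge> 2"
  shows "\<exists>c>0. \<forall>\<delta>>0. \<forall>n. \<forall>\<xi> \<eta> :: nat \<Rightarrow> real.
    (G_delta p \<delta> (posp (vnorm n \<xi> - \<delta> - 1)) - G_delta p \<delta> (posp (vnorm n \<eta> - \<delta> - 1)))\<^sup>2
      \<le> c * (vnorm n (\<lambda>i. H_half p n \<xi> i - H_half p n \<eta> i))\<^sup>2"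
proof (intro exI[of _ 1] conjI allI impI)
  fix \<delta> :: real and n and \<xi> \<eta> :: "nat \<Rightarrow> real"
  assume d: "\<delta> > 0"
  define a where "a = vnorm n \<xi>"
  define b where "b = vnorm n \<eta>"
  define g where "g = (\<lambda>t. G_delta p \<delta> (posp (t - \<delta> - 1)))"
  define h where "h = (\<lambda>t. posp (t - 1) powr (p/2))"
  have gh: "\<bar>g a - g b\<bar> \<le> \<bar>h a - h b\<bar>"
  proof (cases "a \<le> b")
    case True
    from key[OF assms d True] show ?thesis by (simp add: g_def h_def)
  next
    case False
    from key[OF assms d, of b a] False show ?thesis by (simp add: g_def h_def)
  qed
  have "\<bar>h a - h b\<bar> \<le> vnorm n (\<lambda>i. H_half p n \<xi> i - H_half p n \<eta> i)"
    using vnorm_rev[of n "H_half p n \<xi>" "H_half p n \<eta>"]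
    by (simp add: vnorm_H h_def a_def b_def)
  then have "\<bar>g a - g b\<bar> \<le> vnorm n (\<lambda>i. H_half p n \<xi> i - H_half p n \<eta> i)" using gh by linarith
  then have "(g a - g b)\<^sup>2 \<le> (vnorm n (\<lambda>i. H_half p n \<xi> i - H_half p n \<eta> i))\<^sup>2"
    by (metis abs_ge_zero order_trans power2_abs power_mono)
  then show "(G_delta p \<delta> (posp (vnorm n \<xi> - \<delta> - 1)) - G_delta p \<delta> (posp (vnorm n \<eta> - \<delta> - 1)))\<^sup>2
      \<le> 1 * (vnorm n (\<lambda>i. H_half p n \<xi> i - H_half p n \<eta> i))\<^sup>2"
    by (simp add: g_def a_def b_def)
qed simp

end
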